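(* Let $\alpha:U\to V$ be a transmission between supertropical monoids which is injective on the set $eU\setminus\{0\}$. (i) If $\alpha$ has trivial ghost kernel (i.e. $\mathfrak A_\alpha=eU$) and $V$ is a semiring, then $U$ is a semiring. (ii) If $\alpha$ is surjective and $U$ is a semiring, then $V$ is a semiring.
   Context: A bipotent semiring is a commutative monoid $(M,\cdot)$ with absorbing element $0$, equipped with a total order compatible with multiplication in which $0$ is least; addition is $\max$. A supertropical monoid is a monoid $(U,\cdot)$ with absorbing element $0$ and a distinguished central idempotent $e$ with $ex=0\Rightarrow x=0$, together with a total ordering on $M:=eU$ compatible with multiplication making $M$ a bipotent semiring. Define on $U$: $x+y:=y$ if $ex<ey$, $x$ if $ex>ey$, $ex$ if $ex=ey$; $U$ "is a semiring" if this addition is associative and multiplication distributes over it from both sides. A transmission $\alpha:U\to V$ between supertropical monoids is a map with $\alpha(0)=0$, $\alpha(1)=1$, $\alpha(xy)=\alpha(x)\alpha(y)$, $\alpha(e_U)=e_V$, and $x\le y\Rightarrow\alpha(x)\le\alpha(y)$ for $x,y\in eU$. Its ghost kernel is $\mathfrak A_\alpha:=\{x\in U:\alpha(x)\in eV\}$. *)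

theory Defs
  imports Main
begin

text \<open>A supertropical monoid, with carrier the whole type 'a.
  The relation le is only meaningful on the ghost ideal M = eU.\<close>
record 'a stm =
  mul  :: "'a \<Rightarrow> 'a \<Rightarrow> 'a"
  one  :: 'a
  zero :: 'a
  ghost :: 'a
  le   :: "'a \<Rightarrow> 'a \<Rightarrow> bool"

definition ghostset :: "'a stm \<Rightarrow> 'a set" where
  "ghostset U = range (mul U (ghost U))"

definition supertropical_monoid :: "'a stm \<Rightarrow> bool" where
  "supertropical_monoid U \<longleftrightarrow>
     \<comment> \<open>(U,\<cdot>) is a monoid with absorbing element 0\<close>
     (\<forall>x y z. mul U (mul U x y) z = mul U x (mul U y z)) \<and>
     (\<forall>x. mul U (one U) x = x \<and> mul U x (one U) = x) \<and>
     (\<forall>x. mul U (zero U) x = zero U \<and> mul U x (zero U) = zero U) \<and>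
     \<comment> \<open>e is a central idempotent with ex = 0 \<Longrightarrow> x = 0\<close>
     mul U (ghost U) (ghost U) = ghost U \<and>
     (\<forall>x. mul U (ghost U) x = mul U x (ghost U)) \<and>
     (\<forall>x. mul U (ghost U) x = zero U \<longrightarrow> x = zero U) \<and>
     \<comment> \<open>M = eU is a bipotent semiring: commutative monoid, total order compatible
         with multiplication, 0 least\<close>
     (\<forall>x\<in>ghostset U. \<forall>y\<in>ghostset U. mul U x y = mul U y x) \<and>
     (\<forall>x\<in>ghostset U. le U x x) \<and>
     (\<forall>x\<in>ghostset U. \<forall>y\<in>ghostset U. le U x y \<and> le U y x \<longrightarrow> x = y) \<and>
     (\<forall>x\<in>ghostset U. \<forall>y\<in>ghostset U. \<forall>z\<in>ghostset U. le U x y \<and> le U y z \<longrightarrow> le U x z) \<and>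
     (\<forall>x\<in>ghostset U. \<forall>y\<in>ghostset U. le U x y \<or> le U y x) \<and>
     (\<forall>x\<in>ghostset U. \<forall>y\<in>ghostset U. \<forall>z\<in>ghostset U.
         le U x y \<longrightarrow> le U (mul U x z) (mul U y z)) \<and>
     (\<forall>x\<in>ghostset U. le U (zero U) x)"

definition st_add :: "'a stm \<Rightarrow> 'a \<Rightarrow> 'a \<Rightarrow> 'a" where
  "st_add U x y =
     (let ex = mul U (ghost U) x; ey = mul U (ghost U) y in
      if le U ex ey \<and> ex \<noteq> ey then y
      else if le U ey ex \<and> ex \<noteq> ey then x
      else ex)"

definition is_semiring :: "'a stm \<Rightarrow> bool" where
  "is_semiring U \<longleftrightarrow>
     (\<forall>x y z. st_add U (st_add U x y) z = st_add U x (st_add U y z)) \<and>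
     (\<forall>x y z. mul U x (st_add U y z) = st_add U (mul U x y) (mul U x z)) \<and>
     (\<forall>x y z. mul U (st_add U x y) z = st_add U (mul U x z) (mul U y z))"

definition transmission :: "'a stm \<Rightarrow> 'b stm \<Rightarrow> ('a \<Rightarrow> 'b) \<Rightarrow> bool" where
  "transmission U V \<alpha> \<longleftrightarrow>
     \<alpha> (zero U) = zero V \<and> \<alpha> (one U) = one V \<and>
     (\<forall>x y. \<alpha> (mul U x y) = mul V (\<alpha> x) (\<alpha> y)) \<and>
     \<alpha> (ghost U) = ghost V \<and>
     (\<forall>x\<in>ghostset U. \<forall>y\<in>ghostset U. le U x y \<longrightarrow> le V (\<alpha> x) (\<alpha> y))"

definition ghost_kernel :: "'a stm \<Rightarrow> 'b stm \<Rightarrow> ('a \<Rightarrow> 'b) \<Rightarrow> 'a set" where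
  "ghost_kernel U V \<alpha> = {x. \<alpha> x \<in> ghostset V}"

end

theory Submission
  imports Defs
begin

lemma stP:
  assumes "supertropical_monoid U"
  shows st_assoc: "mul U (mul U x y) z = mul U x (mul U y z)"
    and st_one1: "mul U (one U) x = x" and st_one2: "mul U x (one U) = x"
    and st_zero1: "mul U (zero U) x = zero U" and st_zero2: "mul U x (zero U) = zero U"
    and st_idem: "mul U (ghost U) (ghost U) = ghost U"
    and st_central: "mul U (ghost U) x = mul U x (ghost U)"
    and st_ez: "mul U (ghost U) x = zero U \<Longrightarrow> x = zero U"
    and st_comm: "a \<in> ghostset U \<Longrightarrow> b \<in> ghostset U \<Longrightarrow> mul U a b = mul U b a"
    and st_refl: "a \<in> ghostset U \<Longrightarrow> le U a a"
    and st_anti: "a \<in> ghostset U \<Longrightarrow> b \<in> ghostset U \<Longrightarrow> le U a b \<Longrightarrow> le U b a \<Longrightarrow> a = b"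
    and st_trans: "a \<in> ghostset U \<Longrightarrow> b \<in> ghostset U \<Longrightarrow> c \<in> ghostset U \<Longrightarrow> le U a b \<Longrightarrow> le U b c \<Longrightarrow> le U a c"
    and st_tot: "a \<in> ghostset U \<Longrightarrow> b \<in> ghostset U \<Longrightarrow> le U a b \<or> le U b a"
    and st_mono: "a \<in> ghostset U \<Longrightarrow> b \<in> ghostset U \<Longrightarrow> c \<in> ghostset U \<Longrightarrow> le U a b \<Longrightarrow> le U (mul U a c) (mul U b c)"
    and st_zle: "a \<in> ghostset U \<Longrightarrow> le U (zero U) a"
  using assms unfolding supertropical_monoid_def by metis+

lemma gs_iff:
  assumes S: "supertropical_monoid U"
  shows "a \<in> ghostset U \<longleftrightarrow> mul U (ghost U) a = a"
proof
  assume "a \<in> ghostset U"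
  then obtain b where "a = mul U (ghost U) b" by (auto simp: ghostset_def)
  then show "mul U (ghost U) a = a"
    by (simp add: st_assoc[OF S, symmetric] st_idem[OF S])
next
  assume "mul U (ghost U) a = a" then show "a \<in> ghostset U"
    by (metis ghostset_def rangeI)
qed

lemma e_in: "mul U (ghost U) a \<in> ghostset U"
  by (simp add: ghostset_def)

lemma ee: assumes S: "supertropical_monoid U"
  shows "mul U (ghost U) (mul U (ghost U) a) = mul U (ghost U) a"
  by (simp add: st_assoc[OF S, symmetric] st_idem[OF S])

lemma e_zero: assumes "supertropical_monoid U" shows "mul U (ghost U) (zero U) = zero U"
  using st_zero2[OF assms] .

lemma zero_gs: assumes "supertropical_monoid U" shows "zero U \<in> ghostset U"
  using gs_iff[OF assms] e_zero[OF assms] by blast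

lemma e_x: assumes S: "supertropical_monoid U"
  shows "mul U (mul U (ghost U) x) y = mul U (ghost U) (mul U x y)"
  by (metis st_assoc[OF S])

lemma x_e: assumes S: "supertropical_monoid U"
  shows "mul U x (mul U (ghost U) y) = mul U (ghost U) (mul U x y)"
  by (metis st_assoc[OF S] st_central[OF S])

lemma e_mul: assumes S: "supertropical_monoid U"
  shows "mul U (ghost U) (mul U a b) = mul U (mul U (ghost U) a) (mul U (ghost U) b)"
  by (metis st_assoc[OF S] x_e[OF S] ee[OF S])

lemma comb:
  fixes le :: "'a \<Rightarrow> 'a \<Rightarrow> bool"
  assumes tab: "le a b \<or> le b a" and tbc: "le b c \<or> le c b" and tac: "le a c \<or> le c a"
  and aab: "le a b \<Longrightarrow> le b a \<Longrightarrow> a = b"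
  and abc: "le b c \<Longrightarrow> le c b \<Longrightarrow> b = c"
  and aac: "le a c \<Longrightarrow> le c a \<Longrightarrow> a = c"
  and t1: "le a b \<Longrightarrow> le b c \<Longrightarrow> le a c"
  and t2: "le a c \<Longrightarrow> le c b \<Longrightarrow> le a b"
  and t3: "le b a \<Longrightarrow> le a c \<Longrightarrow> le b c"
  and t4: "le b c \<Longrightarrow> le c a \<Longrightarrow> le b a"
  and t5: "le c a \<Longrightarrow> le a b \<Longrightarrow> le c b"
  and t6: "le c b \<Longrightarrow> le b a \<Longrightarrow> le c a"
  shows "(if le (if le a b \<and> a \<noteq> b then b else a) c \<and> (if le a b \<and> a \<noteq> b then b else a) \<noteq> c then z
          else if le c (if le a b \<and> a \<noteq> b then b else a) \<and> (if le a b \<and> a \<noteq> b then b else a) \<noteq> c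
            then (if le a b \<and> a \<noteq> b then y else if le b a \<and> a \<noteq> b then x else a)
          else (if le a b \<and> a \<noteq> b then b else a))
       = (if le a (if le b c \<and> b \<noteq> c then c else b) \<and> a \<noteq> (if le b c \<and> b \<noteq> c then c else b)
            then (if le b c \<and> b \<noteq> c then z else if le c b \<and> b \<noteq> c then y else b)
          else if le (if le b c \<and> b \<noteq> c then c else b) a \<and> a \<noteq> (if le b c \<and> b \<noteq> c then c else b) then x
          else a)"
  using assms by smt

lemma st_add_D: "st_add U a b = (if le U (mul U (ghost U) a) (mul U (ghost U) b) \<and> mul U (ghost U) a \<noteq> mul U (ghost U) b then b
   else if le U (mul U (ghost U) b) (mul U (ghost U) a) \<and> mul U (ghost U) a \<noteq> mul U (ghost U) b then a else mul U (ghost U) a)"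
  unfolding st_add_def Let_def ..

lemma st_add_e:
  assumes S: "supertropical_monoid U"
  shows "mul U (ghost U) (st_add U x y) =
     (if le U (mul U (ghost U) x) (mul U (ghost U) y) \<and> mul U (ghost U) x \<noteq> mul U (ghost U) y then mul U (ghost U) y else mul U (ghost U) x)"
  using ee[OF S] unfolding st_add_D by auto

lemma st_add_assoc:
  assumes S: "supertropical_monoid U"
  shows "st_add U (st_add U x y) z = st_add U x (st_add U y z)"
proof -
  let ?e = "mul U (ghost U)"
  have g: "?e x \<in> ghostset U" "?e y \<in> ghostset U" "?e z \<in> ghostset U" by (rule e_in)+
  have E: "\<And>a. ?e (?e a) = ?e a" using ee[OF S] .
  have "st_add U (st_add U x y) z = (if le U (if le U (?e x) (?e y) \<and> ?e x \<noteq> ?e y then ?e y else ?e x) (?e z) \<and> (if le U (?e x) (?e y) \<and> ?e x \<noteq> ?e y then ?e y else ?e x) \<noteq> ?e z then z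
          else if le U (?e z) (if le U (?e x) (?e y) \<and> ?e x \<noteq> ?e y then ?e y else ?e x) \<and> (if le U (?e x) (?e y) \<and> ?e x \<noteq> ?e y then ?e y else ?e x) \<noteq> ?e z
            then (if le U (?e x) (?e y) \<and> ?e x \<noteq> ?e y then y else if le U (?e y) (?e x) \<and> ?e x \<noteq> ?e y then x else ?e x)
          else (if le U (?e x) (?e y) \<and> ?e x \<noteq> ?e y then ?e y else ?e x))"
    apply (subst st_add_D[of U "st_add U x y"])
    apply (simp only: st_add_e[OF S])
    apply (subst st_add_D[of U x y])+
    apply simp
    done
  also have "\<dots> = (if le U (?e x) (if le U (?e y) (?e z) \<and> ?e y \<noteq> ?e z then ?e z else ?e y) \<and> ?e x \<noteq> (if le U (?e y) (?e z) \<and> ?e y \<noteq> ?e z then ?e z else ?e y)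
            then (if le U (?e y) (?e z) \<and> ?e y \<noteq> ?e z then z else if le U (?e z) (?e y) \<and> ?e y \<noteq> ?e z then y else ?e y)
          else if le U (if le U (?e y) (?e z) \<and> ?e y \<noteq> ?e z then ?e z else ?e y) (?e x) \<and> ?e x \<noteq> (if le U (?e y) (?e z) \<and> ?e y \<noteq> ?e z then ?e z else ?e y) then x
          else ?e x)"
    apply (rule comb)
    using g st_tot[OF S] st_anti[OF S] st_trans[OF S] by meson+
  also have "\<dots> = st_add U x (st_add U y z)"
    apply (subst st_add_D[of U x "st_add U y z"])
    apply (simp only: st_add_e[OF S])
    apply (subst st_add_D[of U y z])+
    apply simp
    done
  finally show ?thesis .
qed


lemma trP:
  assumes "transmission U V f"
  shows tr_zero: "f (zero U) = zero V" and tr_one: "f (one U) = one V"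
    and tr_mul: "f (mul U x y) = mul V (f x) (f y)" and tr_e: "f (ghost U) = ghost V"
    and tr_mono: "a \<in> ghostset U \<Longrightarrow> b \<in> ghostset U \<Longrightarrow> le U a b \<Longrightarrow> le V (f a) (f b)"
  using assms unfolding transmission_def by blast+

lemma tr_ex: assumes "transmission U V f"
  shows "f (mul U (ghost U) x) = mul V (ghost V) (f x)"
  by (simp add: tr_mul[OF assms] tr_e[OF assms])

lemma add_hom:
  assumes SU: "supertropical_monoid U" and SV: "supertropical_monoid V"
    and T: "transmission U V f" and I: "inj_on f (ghostset U - {zero U})"
  shows "f (st_add U x y) = st_add V (f x) (f y)"
proof -
  let ?e = "mul U (ghost U)" and ?E = "mul V (ghost V)"
  have g: "?e x \<in> ghostset U" "?e y \<in> ghostset U" by (rule e_in)+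
  have fx: "f (?e x) = ?E (f x)" and fy: "f (?e y) = ?E (f y)" using tr_ex[OF T] by blast+
  have key: "f u = f w" if u: "?e u = zero U" and wz: "f (?e w) = zero V" for u w
  proof -
    have "u = zero U" using st_ez[OF SU] u by blast
    then have "f u = zero V" using tr_zero[OF T] by simp
    moreover have "f w = zero V" using st_ez[OF SV, of "f w"] wz tr_ex[OF T] by simp
    ultimately show ?thesis by simp
  qed
  have degen: "f p = f q \<and> f p = zero V" if lt: "le U (?e p) (?e q)" "?e p \<noteq> ?e q" and eq: "f (?e p) = f (?e q)" for p q
  proof -
    have g: "?e p \<in> ghostset U" "?e q \<in> ghostset U" by (rule e_in)+
    have fy: "f (?e q) = ?E (f q)" using tr_ex[OF T] by blast
    have ne: "?e p = zero U \<or> ?e q = zero U"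
      using I g eq lt(2) unfolding inj_on_def by blast
    have "?e q \<noteq> zero U"
    proof
      assume "?e q = zero U"
      then have "le U (?e p) (zero U)" using lt by simp
      then show False using st_anti[OF SU g(1) zero_gs[OF SU]] st_zle[OF SU g(1)] lt(2) \<open>?e q = zero U\<close> by simp
    qed
    with ne have ex0: "?e p = zero U" by simp
    then have "p = zero U" using st_ez[OF SU] by blast
    then have fx0: "f p = zero V" using tr_zero[OF T] by simp
    have "f (?e q) = zero V" using eq ex0 tr_zero[OF T] by simp
    then have "f q = zero V" using st_ez[OF SV, of "f q"] fy by simp
    with fx0 show ?thesis by simp
  qed
  have gV: "?E (f x) \<in> ghostset V" "?E (f y) \<in> ghostset V" by (rule e_in)+
  consider (a) "le U (?e x) (?e y) \<and> ?e x \<noteq> ?e y" | (b) "le U (?e y) (?e x) \<and> ?e x \<noteq> ?e y" | (c) "?e x = ?e y"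
    using st_tot[OF SU g] by blast
  then show ?thesis
  proof cases
    case a
    then have L: "st_add U x y = y" by (simp add: st_add_D)
    have le: "le V (?E (f x)) (?E (f y))" using tr_mono[OF T g] a fx fy by simp
    show ?thesis
    proof (cases "?E (f x) = ?E (f y)")
      case True
      have "f (?e x) = f (?e y)" using True fx fy by simp
      with degen[of x y] a have "f x = f y" "f x = zero V" by auto
      then show ?thesis using L e_zero[OF SV] by (simp add: st_add_D)
    next
      case False
      then show ?thesis using L le by (simp add: st_add_D)
    qed
  next
    case b
    then have L: "st_add U x y = x" using st_anti[OF SU g] by (auto simp add: st_add_D)
    have le: "le V (?E (f y)) (?E (f x))" using tr_mono[OF T g(2) g(1)] b fx fy by simp
    show ?thesis
    proof (cases "?E (f x) = ?E (f y)")
      case True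
      have "f (?e y) = f (?e x)" using True fx fy by simp
      with degen[of y x] b have "f x = f y" "f x = zero V" by auto
      then show ?thesis using L e_zero[OF SV] by (simp add: st_add_D)
    next
      case False
      then show ?thesis using L le st_anti[OF SV gV] by (auto simp add: st_add_D)
    qed
  next
    case c
    then have L: "st_add U x y = ?e x" by (simp add: st_add_D)
    have "?E (f x) = ?E (f y)" using c fx fy by metis
    then show ?thesis using L fx by (simp add: st_add_D)
  qed
qed


theorem theorem1p5:
  fixes U :: "'a stm" and V :: "'b stm" and \<alpha> :: "'a \<Rightarrow> 'b"
  assumes "supertropical_monoid U" and "supertropical_monoid V"
    and "transmission U V \<alpha>"
    and "inj_on \<alpha> (ghostset U - {zero U})"
  shows "(ghost_kernel U V \<alpha> = ghostset U \<and> is_semiring V \<longrightarrow> is_semiring U)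
       \<and> (surj \<alpha> \<and> is_semiring U \<longrightarrow> is_semiring V)"
proof (intro conjI impI)
  note SU = assms(1) and SV = assms(2) and T = assms(3) and I = assms(4)
  note AH = add_hom[OF SU SV T I]
  let ?e = "mul U (ghost U)" and ?E = "mul V (ghost V)"
  {
    assume "surj \<alpha> \<and> is_semiring U"
    then have S: "surj \<alpha>" and R: "is_semiring U" by auto
    have ld: "mul V a (st_add V b c) = st_add V (mul V a b) (mul V a c)" for a b c
    proof -
      obtain x y z where "a = \<alpha> x" "b = \<alpha> y" "c = \<alpha> z" using S by (metis surjD)
      moreover have "mul U x (st_add U y z) = st_add U (mul U x y) (mul U x z)"
        using R unfolding is_semiring_def by blast
      ultimately show ?thesis by (metis AH tr_mul[OF T])
    qed
    have rd: "mul V (st_add V a b) c = st_add V (mul V a c) (mul V b c)" for a b c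
    proof -
      obtain x y z where "a = \<alpha> x" "b = \<alpha> y" "c = \<alpha> z" using S by (metis surjD)
      moreover have "mul U (st_add U x y) z = st_add U (mul U x z) (mul U y z)"
        using R unfolding is_semiring_def by blast
      ultimately show ?thesis by (metis AH tr_mul[OF T])
    qed
    show "is_semiring V" unfolding is_semiring_def using st_add_assoc[OF SV] ld rd by blast
  }
  {
    assume "ghost_kernel U V \<alpha> = ghostset U \<and> is_semiring V"
    then have K: "ghost_kernel U V \<alpha> = ghostset U" and R: "is_semiring V" by auto
    have gfix: "?e w = w" if "\<alpha> w = \<alpha> (?e w)" for w
    proof -
      have "\<alpha> w \<in> ghostset V" using that tr_ex[OF T] e_in by metis
      then have "w \<in> ghostset U" using K unfolding ghost_kernel_def by blast
      then show ?thesis using gs_iff[OF SU] by blast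
    qed
    have ld: "mul U x (st_add U y z) = st_add U (mul U x y) (mul U x z)" for x y z
    proof -
      have H: "\<alpha> (mul U x (st_add U y z)) = \<alpha> (st_add U (mul U x y) (mul U x z))"
        using R unfolding is_semiring_def by (simp add: AH tr_mul[OF T])
      have g: "?e x \<in> ghostset U" "?e y \<in> ghostset U" "?e z \<in> ghostset U" by (rule e_in)+
      have exy: "?e (mul U x y) = mul U (?e y) (?e x)" using e_mul[OF SU] st_comm[OF SU g(1) g(2)] by metis
      have exz: "?e (mul U x z) = mul U (?e z) (?e x)" using e_mul[OF SU] st_comm[OF SU g(1) g(3)] by metis
      consider (a) "le U (?e y) (?e z) \<and> ?e y \<noteq> ?e z" | (b) "le U (?e z) (?e y) \<and> ?e y \<noteq> ?e z" | (c) "?e y = ?e z"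
        using st_tot[OF SU g(2) g(3)] by blast
      then show ?thesis
      proof cases
        case a
        then have L: "st_add U y z = z" by (simp add: st_add_D)
        have le: "le U (?e (mul U x y)) (?e (mul U x z))" using exy exz st_mono[OF SU g(2) g(3) g(1)] a by simp
        show ?thesis
        proof (cases "?e (mul U x y) = ?e (mul U x z)")
          case True
          then have "st_add U (mul U x y) (mul U x z) = ?e (mul U x z)" by (simp add: st_add_D)
          then have "?e (mul U x z) = mul U x z" using gfix H L by simp
          then show ?thesis using L True by (simp add: st_add_D)
        next
          case False then show ?thesis using L le by (simp add: st_add_D)
        qed
      next
        case b
        then have L: "st_add U y z = y" using st_anti[OF SU g(2) g(3)] by (auto simp add: st_add_D)
        have le: "le U (?e (mul U x z)) (?e (mul U x y))" using exy exz st_mono[OF SU g(3) g(2) g(1)] b by simp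
        show ?thesis
        proof (cases "?e (mul U x y) = ?e (mul U x z)")
          case True
          then have "st_add U (mul U x y) (mul U x z) = ?e (mul U x y)" by (simp add: st_add_D)
          then have "?e (mul U x y) = mul U x y" using gfix H L by simp
          then show ?thesis using L True by (simp add: st_add_D)
        next
          case False then show ?thesis using L le st_anti[OF SU e_in e_in] by (auto simp add: st_add_D)
        qed
      next
        case c
        then have L: "st_add U y z = ?e y" by (simp add: st_add_D)
        have "?e (mul U x y) = ?e (mul U x z)" using exy exz c by simp
        then show ?thesis using L x_e[OF SU] by (simp add: st_add_D)
      qed
    qed
    have rd: "mul U (st_add U x y) z = st_add U (mul U x z) (mul U y z)" for x y z
    proof -
      have H: "\<alpha> (mul U (st_add U x y) z) = \<alpha> (st_add U (mul U x z) (mul U y z))"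
        using R unfolding is_semiring_def by (simp add: AH tr_mul[OF T])
      have g: "?e x \<in> ghostset U" "?e y \<in> ghostset U" "?e z \<in> ghostset U" by (rule e_in)+
      have exz: "?e (mul U x z) = mul U (?e x) (?e z)" using e_mul[OF SU] by metis
      have eyz: "?e (mul U y z) = mul U (?e y) (?e z)" using e_mul[OF SU] by metis
      consider (a) "le U (?e x) (?e y) \<and> ?e x \<noteq> ?e y" | (b) "le U (?e y) (?e x) \<and> ?e x \<noteq> ?e y" | (c) "?e x = ?e y"
        using st_tot[OF SU g(1) g(2)] by blast
      then show ?thesis
      proof cases
        case a
        then have L: "st_add U x y = y" by (simp add: st_add_D)
        have le: "le U (?e (mul U x z)) (?e (mul U y z))" using exz eyz st_mono[OF SU g(1) g(2) g(3)] a by simp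
        show ?thesis
        proof (cases "?e (mul U x z) = ?e (mul U y z)")
          case True
          then have "st_add U (mul U x z) (mul U y z) = ?e (mul U y z)" by (simp add: st_add_D)
          then have "?e (mul U y z) = mul U y z" using gfix H L by simp
          then show ?thesis using L True by (simp add: st_add_D)
        next
          case False then show ?thesis using L le by (simp add: st_add_D)
        qed
      next
        case b
        then have L: "st_add U x y = x" using st_anti[OF SU g(1) g(2)] by (auto simp add: st_add_D)
        have le: "le U (?e (mul U y z)) (?e (mul U x z))" using exz eyz st_mono[OF SU g(2) g(1) g(3)] b by simp
        show ?thesis
        proof (cases "?e (mul U x z) = ?e (mul U y z)")
          case True
          then have "st_add U (mul U x z) (mul U y z) = ?e (mul U x z)" by (simp add: st_add_D)
          then have "?e (mul U x z) = mul U x z" using gfix H L by simp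
          then show ?thesis using L True by (simp add: st_add_D)
        next
          case False then show ?thesis using L le st_anti[OF SU e_in e_in] by (auto simp add: st_add_D)
        qed
      next
        case c
        then have L: "st_add U x y = ?e x" by (simp add: st_add_D)
        have "?e (mul U x z) = ?e (mul U y z)" using exz eyz c by simp
        then show ?thesis using L e_x[OF SU] by (simp add: st_add_D)
      qed
    qed
    show "is_semiring U" unfolding is_semiring_def using st_add_assoc[OF SU] ld rd by blast
  }
qed

end
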